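(* Let $a,b,c,d\in\mathbb C$ with $a\notin\mathbb Z$ and $d\notin\{0,-1,-2,\dots\}$. Then, as an identity of formal power series in $x,y$, $$F(a,b;d;x)\,{}_1F_1(c;1-a;y)=\mathrm H_2(a,b,c;d;x,-y)+\sum_{k=1}^\infty\sum_{l=1}^k\frac{(-1)^{k-l}(k-1)!}{(l-1)!\,l!\,(k-l)!}\,\frac{(b)_l(c)_k}{(1-a)_k(1-a)_{k-l}(d)_l}\,x^ly^k\,\mathrm H_2(a-k+l,b+l,c+k;d+l;x,-y).$$
   Context: Pochhammer symbol: $(\lambda)_k=\Gamma(\lambda+k)/\Gamma(\lambda)$ for every integer $k$ (possibly negative) whenever defined; $(\lambda)_0=1$. $F(a,b;c;x)=\sum_{k\ge0}\frac{(a)_k(b)_k}{(c)_k k!}x^k$, ${}_1F_1(a;c;x)=\sum_{k\ge0}\frac{(a)_k}{(c)_k k!}x^k$. Confluent Horn function $\mathrm H_2(a,b,c;d;x,y)=\sum_{p,q\ge0}\frac{(a)_{p-q}(b)_p(c)_q}{(d)_p\,p!\,q!}x^py^q$. All functions are regarded as formal power series in $x,y$; the infinite double sum converges in the formal (degree) topology. *)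

theory Defs
  imports Complex_Main
begin

text \<open>Bivariate formal power series in x, y over the complex numbers are represented
  by their coefficient functions: f p q is the coefficient of x^p y^q.\<close>

type_synonym bfps = "nat \<Rightarrow> nat \<Rightarrow> complex"

definition bmult :: "bfps \<Rightarrow> bfps \<Rightarrow> bfps" where
  "bmult f g = (\<lambda>p q. \<Sum>i\<le>p. \<Sum>j\<le>q. f i j * g (p - i) (q - j))"

definition bshift :: "nat \<Rightarrow> nat \<Rightarrow> bfps \<Rightarrow> bfps" where
  "bshift l k f = (\<lambda>p q. if l \<le> p \<and> k \<le> q then f (p - l) (q - k) else 0)"

text \<open>Pochhammer symbol with integer index: (lambda)_k = Gamma(lambda+k)/Gamma(lambda);
  for negative k = -m this is 1/((lambda - m)_m).\<close>
definition poch_int :: "complex \<Rightarrow> int \<Rightarrow> complex" where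
  "poch_int a k = (if 0 \<le> k then pochhammer a (nat k)
                   else inverse (pochhammer (a + of_int k) (nat (- k))))"

definition hyp2F1 :: "complex \<Rightarrow> complex \<Rightarrow> complex \<Rightarrow> bfps" where
  "hyp2F1 a b c = (\<lambda>p q. if q = 0 then
       pochhammer a p * pochhammer b p / (pochhammer c p * fact p) else 0)"

definition hyp1F1y :: "complex \<Rightarrow> complex \<Rightarrow> bfps" where
  "hyp1F1y a c = (\<lambda>p q. if p = 0 then
       pochhammer a q / (pochhammer c q * fact q) else 0)"

text \<open>Confluent Horn function H2(a,b,c;d;x,-y) (note the sign of the second variable).\<close>
definition H2neg :: "complex \<Rightarrow> complex \<Rightarrow> complex \<Rightarrow> complex \<Rightarrow> bfps" where
  "H2neg a b c d = (\<lambda>p q.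
       poch_int a (int p - int q) * pochhammer b p * pochhammer c q
       / (pochhammer d p * fact p * fact q) * (-1) ^ q)"

end

theory Submission
  imports Defs "HOL-Analysis.Gamma_Function"
begin

definition rr :: "complex \<Rightarrow> int \<Rightarrow> complex" where
  "rr a n = rGamma (a + of_int n)"

lemma rr_nz: assumes "a \<notin> \<int>" shows "rr a n \<noteq> 0"
proof
  assume "rr a n = 0"
  hence "a + of_int n \<in> \<int>" unfolding rr_def rGamma_eq_zero_iff using nonpos_Ints_subset_Ints by blast
  hence "a + of_int n - of_int n \<in> \<int>" by (intro Ints_diff) auto
  with assms show False by simp
qed

lemma poch_rr: "pochhammer (a + of_int m) k = rr a m / rr a (m + int k)" if "a \<notin> \<int>"
  using pochhammer_rGamma[of "a + of_int m" k] rr_nz[OF that, of "m + int k"]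
  by (simp add: rr_def add.assoc)

lemma poch_int_rr: assumes "a \<notin> \<int>"
  shows "poch_int (a + of_int m) k = rr a m / rr a (m + k)"
proof (cases "0 \<le> k")
  case True
  then show ?thesis using poch_rr[OF assms, of m "nat k"] by (simp add: poch_int_def)
next
  case False
  have "pochhammer (a + of_int (m + k)) (nat (-k)) = rr a (m+k) / rr a (m + k + int (nat (-k)))"
    by (rule poch_rr[OF assms])
  also have "m + k + int (nat (-k)) = m" using False by simp
  finally show ?thesis using False rr_nz[OF assms] by (simp add: poch_int_def add.assoc)
qed

lemma poch_1ma: assumes "a \<notin> \<int>"
  shows "pochhammer (1 - a) k = (-1)^k * rr a (- int k) / rr a 0"
proof -
  have "pochhammer (1 - a) k = pochhammer (- (a - 1)) k" by simp
  also have "\<dots> = (-1)^k * pochhammer (a + of_int (- int k)) k"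
    using pochhammer_minus[of "a - 1" k] by (simp add: algebra_simps)
  also have "\<dots> = (-1)^k * (rr a (- int k) / rr a 0)" using poch_rr[OF assms, of "- int k" k] by simp
  finally show ?thesis by simp
qed

lemma poch_a: assumes "a \<notin> \<int>" shows "pochhammer a p = rr a 0 / rr a (int p)"
  using poch_rr[OF assms, of 0 p] by simp

lemma keyE: assumes "a \<notin> \<int>"
  shows "(\<Sum>k\<le>q. of_nat ((p + k - 1) choose k) / (rr a (- int k) * fact (q - k)))
       = rr a (int p - int q) / (rr a (int p) * rr a (- int q) * fact q)"
proof -
  have nz: "\<And>n. rr a n \<noteq> 0" using rr_nz[OF assms] .
  have t: "of_nat ((p + k - 1) choose k) / (rr a (- int k) * fact (q - k))
      = (of_nat (q choose k) * pochhammer (of_nat p) k * pochhammer (a - of_nat q) (q - k)) / (rr a (- int q) * fact q)"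
    if "k \<le> q" for k
  proof -
    have c: "(of_nat ((p + k - 1) choose k) :: complex) = pochhammer (of_nat p) k / fact k"
    proof (cases "k = 0")
      case False
      have "(of_nat ((p + k - 1) choose k) :: complex) = of_nat (p + k - 1) gchoose k" by (rule binomial_gbinomial)
      also have "\<dots> = pochhammer (of_nat (p + k - 1) - of_nat k + 1) k / fact k" by (rule gbinomial_pochhammer')
      also have "of_nat (p + k - 1) - of_nat k + 1 = (of_nat p :: complex)" using False by (simp add: of_nat_diff)
      finally show ?thesis .
    qed simp
    have pq: "pochhammer (a - of_nat q) (q - k) = rr a (- int q) / rr a (- int k)"
      using poch_rr[OF assms, of "- int q" "q - k"] that by (simp add: of_nat_diff)
    have bq: "(of_nat (q choose k) :: complex) = fact q / (fact k * fact (q - k))" by (rule binomial_fact[OF that])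
    show ?thesis unfolding c pq bq using nz by (simp add: field_simps)
  qed
  have "(\<Sum>k\<le>q. of_nat ((p + k - 1) choose k) / (rr a (- int k) * fact (q - k)))
     = (\<Sum>k\<le>q. of_nat (q choose k) * pochhammer (of_nat p) k * pochhammer (a - of_nat q) (q - k)) / (rr a (- int q) * fact q)"
    unfolding sum_divide_distrib by (rule sum.cong[OF refl t]) simp
  also have "(\<Sum>k\<le>q. of_nat (q choose k) * pochhammer (of_nat p) k * pochhammer (a - of_nat q) (q - k))
      = pochhammer (of_nat p + (a - of_nat q)) q" by (rule pochhammer_binomial_sum[symmetric])
  also have "pochhammer (of_nat p + (a - of_nat q)) q = rr a (int p - int q) / rr a (int p)"
    using poch_rr[OF assms, of "int p - int q" q] by (simp add: algebra_simps)
  finally show ?thesis using nz by (simp add: field_simps)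
qed

lemma inv_poch_1ma: assumes "a \<notin> \<int>"
  shows "1 / pochhammer (1 - a) k = (-1)^k * rr a 0 / rr a (- int k)"
proof -
  have s: "(-1::complex)^k * (-1)^k = 1" by (simp add: power_mult_distrib[symmetric])
  have "1 / pochhammer (1 - a) k = rr a 0 / ((-1)^k * rr a (- int k))"
    using poch_1ma[OF assms, of k] by simp
  also have "\<dots> = ((-1)^k * (-1)^k) * rr a 0 / ((-1)^k * rr a (- int k))" by (simp only: s mult_1_left)
  also have "\<dots> = (-1)^k * rr a 0 / rr a (- int k)" using rr_nz[OF assms] by (simp add: field_simps)
  finally show ?thesis .
qed

lemma d_nz: fixes d :: complex assumes "\<forall>n::nat. d \<noteq> - of_nat n" shows "pochhammer d n \<noteq> 0"
  using assms pochhammer_eq_0_iff[of d n] by auto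

lemma alg:
  fixes sj sk sm Fk1 Fl1 Fl Fj Fi Fm Fp Pbl Pck Pdl Pbi Pcm Pdi R0 Rk Rj Rpq :: complex
  assumes "Fl1 \<noteq> 0" "Fl \<noteq> 0" "Fj \<noteq> 0" "Fi \<noteq> 0" "Fm \<noteq> 0" "Fp \<noteq> 0"
    "Pdl \<noteq> 0" "Pdi \<noteq> 0" "R0 \<noteq> 0" "Rk \<noteq> 0" "Rj \<noteq> 0" "Rpq \<noteq> 0"
  shows "sj * Fk1 / (Fl1 * Fl * Fj) * (Pbl * Pck * (sk * R0 / Rk) * (sj * R0 / Rj) / Pdl)
     * (Rj / Rpq * Pbi * Pcm / (Pdi * Fi * Fm) * sm)
   = Pbl * Pbi * (Pck * Pcm) / (Pdl * Pdi) * (sj * sk * sj * sm) * R0\<^sup>2 / (Rpq * Fp)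
     * (Fp / (Fl * Fi) * (Fk1 / (Fl1 * Fj)) / (Rk * Fm))"
  using assms by (simp add: field_simps power2_eq_square)

lemma term_eq:
  fixes a b c d :: complex
  assumes a: "a \<notin> \<int>" and d: "\<forall>n::nat. d \<noteq> - of_nat n"
    and kl: "1 \<le> l" "l \<le> k" "k \<le> q"
  shows "((-1) ^ (k - l) * fact (k - 1) / (fact (l - 1) * fact l * fact (k - l)))
            * (pochhammer b l * pochhammer c k
               / (pochhammer (1 - a) k * pochhammer (1 - a) (k - l) * pochhammer d l))
            * bshift l k (H2neg (a - of_nat k + of_nat l) (b + of_nat l) (c + of_nat k) (d + of_nat l)) p q
       = pochhammer b p * pochhammer c q / pochhammer d p * (-1)^q * (rr a 0)^2 / (rr a (int p - int q) * fact p)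
          * (of_nat (p choose l) * of_nat ((k - 1) choose (l - 1)) / (rr a (- int k) * fact (q - k)))"
proof (cases "l \<le> p")
  case False
  then show ?thesis by (simp add: bshift_def)
next
  case True
  obtain i where i: "p = l + i" using True le_Suc_ex by blast
  obtain j where j: "k = l + j" using kl le_Suc_ex by blast
  obtain m where m: "q = l + j + m" using kl j le_Suc_ex by blast
  have nz: "\<And>n. rr a n \<noteq> 0" using rr_nz[OF a] .
  have dnz: "\<And>n. pochhammer d n \<noteq> 0" using d_nz[OF d] .
  have pb: "pochhammer b l * pochhammer (b + of_nat l) i = pochhammer b p"
    using pochhammer_product'[of b l i] i by simp
  have pc: "pochhammer c k * pochhammer (c + of_nat k) m = pochhammer c q"
    using pochhammer_product'[of c k m] j m by (simp add: add.assoc)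
  have pd: "pochhammer d l * pochhammer (d + of_nat l) i = pochhammer d p"
    using pochhammer_product'[of d l i] i by simp
  have pd2: "pochhammer (d + of_nat l) i \<noteq> 0" using pd dnz[of p] by auto
  have pa: "poch_int (a - of_nat k + of_nat l) (int i - int m) = rr a (- int j) / rr a (int p - int q)"
  proof -
    have e1: "a - of_nat k + of_nat l = a + of_int (- int j)" using j by simp
    have e2: "- int j + (int i - int m) = int p - int q" using i j m by simp
    show ?thesis unfolding e1 using poch_int_rr[OF a, of "- int j" "int i - int m"] unfolding e2 .
  qed
  have i1: "1 / pochhammer (1 - a) k = (-1)^k * rr a 0 / rr a (- int k)" by (rule inv_poch_1ma[OF a])
  have i2: "1 / pochhammer (1 - a) j = (-1)^j * rr a 0 / rr a (- int j)" by (rule inv_poch_1ma[OF a])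
  have b1: "(of_nat (p choose l) :: complex) = fact p / (fact l * fact i)"
    using binomial_fact[OF True] i by simp
  have b2: "(of_nat ((k - 1) choose (l - 1)) :: complex) = fact (k - 1) / (fact (l - 1) * fact j)"
  proof -
    have "(k - 1) - (l - 1) = j" using kl j by simp
    thus ?thesis using binomial_fact[of "l - 1" "k - 1", where 'a=complex] kl by simp
  qed
  have sg: "(-1::complex) ^ j * (-1) ^ k * (-1) ^ j * (-1) ^ m = (-1) ^ q"
  proof -
    have s: "(-1::complex)^j * (-1)^j = 1" by (simp add: power_mult_distrib[symmetric])
    have "(-1::complex) ^ j * (-1) ^ k * (-1) ^ j * (-1) ^ m = ((-1)^j * (-1)^j) * ((-1)^l * (-1)^j * (-1)^m)"
      using j by (simp add: power_add algebra_simps)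
    also have "\<dots> = (-1)^q" using m s by (simp add: power_add)
    finally show ?thesis .
  qed
  have kl': "k - l = j" "p - l = i" "q - k = m" using i j m by auto
  have L: "((-1) ^ (k - l) * fact (k - 1) / (fact (l - 1) * fact l * fact (k - l)))
            * (pochhammer b l * pochhammer c k
               / (pochhammer (1 - a) k * pochhammer (1 - a) (k - l) * pochhammer d l))
            * bshift l k (H2neg (a - of_nat k + of_nat l) (b + of_nat l) (c + of_nat k) (d + of_nat l)) p q
      = ((-1) ^ j * fact (k - 1) / (fact (l - 1) * fact l * fact j))
            * (pochhammer b l * pochhammer c k * (1 / pochhammer (1 - a) k) * (1 / pochhammer (1 - a) j) / pochhammer d l)
            * ((rr a (- int j) / rr a (int p - int q)) * pochhammer (b + of_nat l) i * pochhammer (c + of_nat k) m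
                / (pochhammer (d + of_nat l) i * fact i * fact m) * (-1) ^ m)"
    unfolding bshift_def H2neg_def kl' using True kl pa by simp
  show ?thesis unfolding L i1 i2 b1 b2 kl'(3) sg[symmetric] pb[symmetric] pc[symmetric] pd[symmetric]
    by (rule alg) (use nz dnz pd2 in auto)
qed

lemma vdm: assumes "1 \<le> k"
  shows "(\<Sum>l=1..k. (p choose l) * ((k - 1) choose (l - 1))) = (p + k - 1) choose k"
proof -
  have "(p + k - 1) choose k = (\<Sum>i\<le>k. (p choose i) * ((k - 1) choose (k - i)))"
    using vandermonde[of p "k - 1" k] assms by simp
  also have "{..k} = insert 0 {1..k}" by auto
  also have "(\<Sum>i\<in>insert 0 {1..k}. (p choose i) * ((k - 1) choose (k - i)))
      = (\<Sum>i=1..k. (p choose i) * ((k - 1) choose (k - i)))"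
    using assms by (subst sum.insert) auto
  also have "\<dots> = (\<Sum>l=1..k. (p choose l) * ((k - 1) choose (l - 1)))"
  proof (rule sum.cong[OF refl])
    fix i assume "i \<in> {1..k}"
    hence "(k - 1) choose (i - 1) = (k - 1) choose ((k - 1) - (i - 1))" by (intro binomial_symmetric) auto
    moreover have "(k - 1) - (i - 1) = k - i" using \<open>i \<in> {1..k}\<close> by auto
    ultimately show "(p choose i) * ((k - 1) choose (k - i)) = (p choose i) * ((k - 1) choose (i - 1))" by simp
  qed
  finally show ?thesis by simp
qed

lemma bmult_eq: "bmult (hyp2F1 a b d) (hyp1F1y c e) p q = hyp2F1 a b d p 0 * hyp1F1y c e 0 q"
proof -
  have inner: "(\<Sum>j\<le>q. hyp2F1 a b d i j * hyp1F1y c e (p - i) (q - j)) = hyp2F1 a b d i 0 * hyp1F1y c e (p - i) q" for i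
  proof -
    have "(\<Sum>j\<le>q. hyp2F1 a b d i j * hyp1F1y c e (p - i) (q - j))
        = (\<Sum>j\<le>q. if j = 0 then hyp2F1 a b d i 0 * hyp1F1y c e (p - i) q else 0)"
      by (rule sum.cong) (auto simp: hyp2F1_def)
    also have "\<dots> = hyp2F1 a b d i 0 * hyp1F1y c e (p - i) q" by simp
    finally show ?thesis .
  qed
  have "bmult (hyp2F1 a b d) (hyp1F1y c e) p q = (\<Sum>i\<le>p. hyp2F1 a b d i 0 * hyp1F1y c e (p - i) q)"
    unfolding bmult_def inner ..
  also have "\<dots> = (\<Sum>i\<le>p. if i = p then hyp2F1 a b d p 0 * hyp1F1y c e 0 q else 0)"
    by (rule sum.cong) (auto simp: hyp1F1y_def)
  also have "\<dots> = hyp2F1 a b d p 0 * hyp1F1y c e 0 q" by simp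
  finally show ?thesis .
qed

lemma alg2:
  fixes Pb Pc Pd s R0 Rp Rq Rpq Fp Fq P1 Pa :: complex
  assumes "Pd \<noteq> 0" "R0 \<noteq> 0" "Rp \<noteq> 0" "Rq \<noteq> 0" "Rpq \<noteq> 0" "Fp \<noteq> 0" "Fq \<noteq> 0"
    and "Pa = R0 / Rp" and "1 / P1 = s * R0 / Rq"
  shows "Pb * Pc / Pd * s * R0\<^sup>2 / (Rpq * Fp) * (Rpq / (Rp * Rq * Fq) - 1 / (R0 * Fq))
     = Pa * Pb / (Pd * Fp) * (Pc / (P1 * Fq)) - R0 / Rpq * Pb * Pc / (Pd * Fp * Fq) * s"
proof -
  have "Pc / (P1 * Fq) = Pc * (1 / P1) / Fq" by simp
  also have "\<dots> = Pc * (s * R0 / Rq) / Fq" using assms by simp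
  finally have e: "Pc / (P1 * Fq) = Pc * (s * R0 / Rq) / Fq" .
  show ?thesis unfolding e assms(8) using assms(1-7) by (simp add: field_simps power2_eq_square)
qed

theorem mainTheorem5:
  fixes a b c d :: complex
  assumes "a \<notin> \<int>"
    and "\<forall>n::nat. d \<noteq> - of_nat n"
  shows "\<forall>p q. (\<lambda>k. (\<Sum>l=1..k.
            ((-1) ^ (k - l) * fact (k - 1)
               / (fact (l - 1) * fact l * fact (k - l)))
            * (pochhammer b l * pochhammer c k
               / (pochhammer (1 - a) k * pochhammer (1 - a) (k - l) * pochhammer d l))
            * bshift l k (H2neg (a - of_nat k + of_nat l) (b + of_nat l) (c + of_nat k) (d + of_nat l)) p q))
         sums (bmult (hyp2F1 a b d) (hyp1F1y c (1 - a)) p q - H2neg a b c d p q)"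
proof (intro allI)
  fix p q :: nat
  define t where "t k = (\<Sum>l=1..k.
            ((-1) ^ (k - l) * fact (k - 1)
               / (fact (l - 1) * fact l * fact (k - l)))
            * (pochhammer b l * pochhammer c k
               / (pochhammer (1 - a) k * pochhammer (1 - a) (k - l) * pochhammer d l))
            * bshift l k (H2neg (a - of_nat k + of_nat l) (b + of_nat l) (c + of_nat k) (d + of_nat l)) p q)" for k
  define X where "X = pochhammer b p * pochhammer c q / pochhammer d p * (-1)^q * (rr a 0)^2 / (rr a (int p - int q) * fact p)"
  have nz: "\<And>n. rr a n \<noteq> 0" using rr_nz[OF assms(1)] .
  have t0: "t k = 0" if "k \<notin> {1..q}" for k
  proof (cases "k = 0")
    case True then show ?thesis by (simp add: t_def)
  next
    case False
    hence "q < k" using that by auto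
    thus ?thesis by (simp add: t_def bshift_def)
  qed
  have tk: "t k = X * (of_nat ((p + k - 1) choose k) / (rr a (- int k) * fact (q - k)))" if "k \<in> {1..q}" for k
  proof -
    have "t k = (\<Sum>l=1..k. X * (of_nat (p choose l) * of_nat ((k - 1) choose (l - 1)) / (rr a (- int k) * fact (q - k))))"
      unfolding t_def X_def by (rule sum.cong[OF refl], rule term_eq[OF assms]) (use that in auto)
    also have "\<dots> = X * ((\<Sum>l=1..k. of_nat (p choose l) * of_nat ((k - 1) choose (l - 1))) / (rr a (- int k) * fact (q - k)))"
      by (simp add: sum_distrib_left sum_divide_distrib)
    also have "(\<Sum>l=1..k. of_nat (p choose l) * of_nat ((k - 1) choose (l - 1))) = (of_nat ((p + k - 1) choose k) :: complex)"
      using vdm[of k p] that by (simp flip: of_nat_mult of_nat_sum)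
    finally show ?thesis .
  qed
  have "t sums (\<Sum>k\<in>{1..q}. t k)" by (rule sums_finite) (use t0 in auto)
  also have "(\<Sum>k\<in>{1..q}. t k) = X * (\<Sum>k\<in>{1..q}. of_nat ((p + k - 1) choose k) / (rr a (- int k) * fact (q - k)))"
    by (simp add: tk sum_distrib_left)
  also have "(\<Sum>k\<in>{1..q}. of_nat ((p + k - 1) choose k) / (rr a (- int k) * fact (q - k)))
      = (\<Sum>k\<le>q. of_nat ((p + k - 1) choose k) / (rr a (- int k) * fact (q - k))) - 1 / (rr a 0 * fact q)"
  proof -
    have "{..q} = insert 0 {1..q}" by auto
    hence "(\<Sum>k\<le>q. of_nat ((p + k - 1) choose k) / (rr a (- int k) * fact (q - k)))
       = 1 / (rr a 0 * fact q) + (\<Sum>k\<in>{1..q}. of_nat ((p + k - 1) choose k) / (rr a (- int k) * fact (q - k)))"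
      by (simp add: sum.insert)
    thus ?thesis by simp
  qed
  also have "(\<Sum>k\<le>q. of_nat ((p + k - 1) choose k) / (rr a (- int k) * fact (q - k)))
      = rr a (int p - int q) / (rr a (int p) * rr a (- int q) * fact q)" by (rule keyE[OF assms(1)])
  also have "X * (rr a (int p - int q) / (rr a (int p) * rr a (- int q) * fact q) - 1 / (rr a 0 * fact q))
      = bmult (hyp2F1 a b d) (hyp1F1y c (1 - a)) p q - H2neg a b c d p q"
  proof -
    have pa: "poch_int a (int p - int q) = rr a 0 / rr a (int p - int q)"
      using poch_int_rr[OF assms(1), of 0 "int p - int q"] by simp
    show ?thesis unfolding bmult_eq X_def
      unfolding hyp2F1_def hyp1F1y_def H2neg_def pa
      apply (simp only: if_True simp_thms(6))
      by (rule alg2) (use nz d_nz[OF assms(2)] poch_a[OF assms(1)] inv_poch_1ma[OF assms(1)] in auto)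
  qed
  finally show "t sums (bmult (hyp2F1 a b d) (hyp1F1y c (1 - a)) p q - H2neg a b c d p q)" .
qed

end
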